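(* Let $(\Lambda(x_1,x_2,x_3,x_4;y_1,y_2,y_3,y_4),\partial)$ be as in the context, let $\alpha\in\mathrm{aut}_\sharp$ with $\alpha(x_1)=x_1$, $\alpha(x_i)=x_i+A_i$ ($i=2,3,4$), and write $P_1=\sum_{k=0}^{s}\theta_k x_4^k$ with $\theta_k\in\mathbb{Q}[x_1,x_2,x_3]$, $\theta_s\neq0$. Then for every $0\le i\le s-1$, $$\alpha(\theta_i)=\theta_i+\sum_{k=1}^{s-i}(-1)^k\binom{k+i}{k}\theta_{k+i}A_4^{k}.$$
   Context: Setting: $x_1,\dots,x_4$ are generators of positive even degrees with $|x_1|\le|x_2|\le|x_3|\le|x_4|$, $y_1,\dots,y_4$ are of odd degree, $(\Lambda(x_1,\dots,x_4;y_1,\dots,y_4),\partial)$ is the free graded-commutative cochain algebra over $\mathbb{Q}$ with $\partial x_i=0$, $\partial y_i=P_i\in\mathbb{Q}[x_1,\dots,x_4]$, where $P_1,\dots,P_4$ is a regular sequence and $|P_1|\le|P_2|\le|P_3|\le|P_4|$. $\mathrm{aut}_\sharp$ is the group of cochain algebra automorphisms inducing the identity on the indecomposables $\mathrm{span}(x_i,y_i)$; for $\alpha\in\mathrm{aut}_\sharp$ one has $\alpha(x_1)=x_1$ and $\alpha(x_i)=x_i+A_i$ with $A_i$ polynomials in the $x_j$. *)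

theory Defs
  imports Complex_Main "HOL-Library.Poly_Mapping"
begin

datatype idx = I1 | I2 | I3 | I4

fun ix :: "idx \<Rightarrow> nat" where
  "ix I1 = 1" | "ix I2 = 2" | "ix I3 = 3" | "ix I4 = 4"

definition allidx :: "idx set" where "allidx = {I1, I2, I3, I4}"

type_synonym mpoly = "(idx \<Rightarrow>\<^sub>0 nat) \<Rightarrow>\<^sub>0 rat"

definition Xv :: "idx \<Rightarrow> mpoly" where
  "Xv i = Poly_Mapping.single (Poly_Mapping.single i 1) 1"

definition const :: "rat \<Rightarrow> mpoly" where
  "const c = Poly_Mapping.single 0 c"

definition poly_in_vars :: "idx set \<Rightarrow> mpoly \<Rightarrow> bool" where
  "poly_in_vars V p \<longleftrightarrow> (\<forall>m. Poly_Mapping.lookup p m \<noteq> 0 \<longrightarrow> Poly_Mapping.keys m \<subseteq> V)"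

definition mdeg :: "(idx \<Rightarrow> nat) \<Rightarrow> (idx \<Rightarrow>\<^sub>0 nat) \<Rightarrow> nat" where
  "mdeg d m = (\<Sum>i\<in>allidx. Poly_Mapping.lookup m i * d i)"

definition poly_hom :: "(idx \<Rightarrow> nat) \<Rightarrow> nat \<Rightarrow> mpoly \<Rightarrow> bool" where
  "poly_hom d n p \<longleftrightarrow> (\<forall>m. Poly_Mapping.lookup p m \<noteq> 0 \<longrightarrow> mdeg d m = n)"

definition ideal_before :: "(idx \<Rightarrow> mpoly) \<Rightarrow> nat \<Rightarrow> mpoly set" where
  "ideal_before P k = {p. \<exists>g. p = (\<Sum>j\<in>{j\<in>allidx. ix j < k}. g j * P j)}"

definition regular_seq :: "(idx \<Rightarrow> mpoly) \<Rightarrow> bool" where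
  "regular_seq P \<longleftrightarrow>
     (\<forall>j\<in>allidx. \<forall>f. f * P j \<in> ideal_before P (ix j) \<longrightarrow> f \<in> ideal_before P (ix j))
     \<and> 1 \<notin> ideal_before P 5"

text \<open>An element is written as sum over S \<subseteq> {1..4} of f(S) * y_S, where
  y_S = y_{s1} y_{s2} ... y_{sk} with s1 < ... < sk and f(S) in Q[x].\<close>
type_synonym lam = "idx set \<Rightarrow> mpoly"

definition lzero :: lam where "lzero = (\<lambda>S. 0)"
definition lone :: lam where "lone = (\<lambda>S. if S = {} then 1 else 0)"
definition ladd :: "lam \<Rightarrow> lam \<Rightarrow> lam" where "ladd f g = (\<lambda>S. f S + g S)"
definition lsub :: "lam \<Rightarrow> lam \<Rightarrow> lam" where "lsub f g = (\<lambda>S. f S - g S)"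
definition lscale :: "rat \<Rightarrow> lam \<Rightarrow> lam" where "lscale c f = (\<lambda>S. const c * f S)"

definition emb :: "mpoly \<Rightarrow> lam" where "emb p = (\<lambda>S. if S = {} then p else 0)"

definition ygen :: "idx \<Rightarrow> lam" where "ygen i = (\<lambda>S. if S = {i} then 1 else 0)"

text \<open>Sign of y_A * y_B = sgn A B * y_(A \<union> B) for disjoint A, B.\<close>
definition ysgn :: "idx set \<Rightarrow> idx set \<Rightarrow> mpoly" where
  "ysgn A B = (-1) ^ card {(a, b). a \<in> A \<and> b \<in> B \<and> ix b < ix a}"

definition lmul :: "lam \<Rightarrow> lam \<Rightarrow> lam" where
  "lmul f g = (\<lambda>S. \<Sum>A\<in>Pow S. ysgn A (S - A) * f A * g (S - A))"

text \<open>The differential: the unique derivation with d x_i = 0, d y_i = P_i.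
  d(p y_S) = sum over j in S of (-1)^#{t in S, t<j} p P_j y_(S-{j}).\<close>
definition ldiff :: "(idx \<Rightarrow> mpoly) \<Rightarrow> lam \<Rightarrow> lam" where
  "ldiff P f = (\<lambda>T. \<Sum>j\<in>allidx - T.
      (-1) ^ card {t\<in>T. ix t < ix j} * P j * f (insert j T))"

text \<open>Grading: |x_i| = d i, |y_i| = e i.\<close>
definition ydeg :: "(idx \<Rightarrow> nat) \<Rightarrow> idx set \<Rightarrow> nat" where
  "ydeg e S = (\<Sum>i\<in>S. e i)"

definition lhom :: "(idx \<Rightarrow> nat) \<Rightarrow> (idx \<Rightarrow> nat) \<Rightarrow> nat \<Rightarrow> lam \<Rightarrow> bool" where
  "lhom d e n f \<longleftrightarrow> (\<forall>S m. Poly_Mapping.lookup (f S) m \<noteq> 0 \<longrightarrow> mdeg d m + ydeg e S = n)"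

text \<open>Lambda^+ : elements of positive degree (all generators have positive degree,
  so these are the elements with vanishing constant term).\<close>
definition lplus :: "lam set" where
  "lplus = {f. Poly_Mapping.lookup (f {}) 0 = 0}"

inductive_set ldec :: "lam set" where
  ldec_zero: "lzero \<in> ldec"
| ldec_step: "a \<in> lplus \<Longrightarrow> b \<in> lplus \<Longrightarrow> c \<in> ldec \<Longrightarrow> ladd (lmul a b) c \<in> ldec"

definition cochain_aut :: "(idx \<Rightarrow> nat) \<Rightarrow> (idx \<Rightarrow> nat) \<Rightarrow> (idx \<Rightarrow> mpoly) \<Rightarrow> (lam \<Rightarrow> lam) \<Rightarrow> bool" where
  "cochain_aut d e P \<alpha> \<longleftrightarrow>
     bij \<alpha>
     \<and> (\<forall>f g. \<alpha> (ladd f g) = ladd (\<alpha> f) (\<alpha> g))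
     \<and> (\<forall>c f. \<alpha> (lscale c f) = lscale c (\<alpha> f))
     \<and> (\<forall>f g. \<alpha> (lmul f g) = lmul (\<alpha> f) (\<alpha> g))
     \<and> \<alpha> lone = lone
     \<and> (\<forall>n f. lhom d e n f \<longrightarrow> lhom d e n (\<alpha> f))
     \<and> (\<forall>f. \<alpha> (ldiff P f) = ldiff P (\<alpha> f))"

text \<open>aut_sharp: automorphisms inducing the identity on the indecomposables
  Lambda^+ / (Lambda^+ . Lambda^+).\<close>
definition aut_sharp :: "(idx \<Rightarrow> nat) \<Rightarrow> (idx \<Rightarrow> nat) \<Rightarrow> (idx \<Rightarrow> mpoly) \<Rightarrow> (lam \<Rightarrow> lam) set" where
  "aut_sharp d e P = {\<alpha>. cochain_aut d e P \<alpha> \<and> (\<forall>v\<in>lplus. lsub (\<alpha> v) v \<in> ldec)}"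

definition setting :: "(idx \<Rightarrow> nat) \<Rightarrow> (idx \<Rightarrow> nat) \<Rightarrow> (idx \<Rightarrow> mpoly) \<Rightarrow> bool" where
  "setting d e P \<longleftrightarrow>
     (\<forall>i. d i > 0 \<and> even (d i)) \<and> (\<forall>i. odd (e i))
     \<and> d I1 \<le> d I2 \<and> d I2 \<le> d I3 \<and> d I3 \<le> d I4
     \<and> (\<forall>i. poly_hom d (e i + 1) (P i))
     \<and> regular_seq P
     \<and> e I1 \<le> e I2 \<and> e I2 \<le> e I3 \<and> e I3 \<le> e I4"

end

theory Submission
  imports Defs
begin


abbreviation "lk \<equiv> Poly_Mapping.lookup"
abbreviation "sg \<equiv> Poly_Mapping.single"

lemma idx_UNIV: "(UNIV::idx set) = {I1,I2,I3,I4}"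
  using idx.exhaust by auto

lemma allidx_UNIV: "allidx = UNIV" using idx_UNIV allidx_def by simp

lemma finite_UNIV_idx[simp]: "finite (UNIV::idx set)" by (simp add: idx_UNIV)

lemma finite_idx_set[simp]: "finite (S::idx set)"
  by (rule finite_subset[OF subset_UNIV]) simp

lemma lookup_mult_nz:
  fixes p q :: mpoly
  assumes "lk (p*q) x \<noteq> 0"
  shows "\<exists>a b. lk p a \<noteq> 0 \<and> lk q b \<noteq> 0 \<and> x = a + b"
proof -
  have "x \<in> Poly_Mapping.keys (p*q)" using assms by (simp add: in_keys_iff)
  then have "x \<in> {a + b |a b. a \<in> Poly_Mapping.keys p \<and> b \<in> Poly_Mapping.keys q}"
    using keys_mult[of p q] by blast
  then show ?thesis by (auto simp: in_keys_iff)
qed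

lemma lookup_mult_single_shift:
  fixes p :: mpoly
  shows "lk (p * sg k b) (l + k) = lk p l * b"
proof (induction p rule: update_induct)
  case const then show ?case by simp
next
  case (update f a c)
  have u: "Poly_Mapping.update a c f = f + sg a c"
    using update.hyps by (intro poly_mapping_eqI) (auto simp: lookup_update lookup_add lookup_single in_keys_iff when_def)
  have "lk ((f + sg a c) * sg k b) (l+k) = lk (f * sg k b) (l+k) + lk (sg (a+k) (c*b)) (l+k)"
    by (simp add: distrib_right mult_single lookup_add)
  also have "\<dots> = lk f l * b + (if a = l then c*b else 0)"
    by (simp add: update.IH lookup_single when_def)
  also have "\<dots> = lk (f + sg a c) l * b"
    by (simp add: lookup_add lookup_single when_def distrib_right)
  finally show ?case unfolding u .
qed

lemma lookup_mult_single_none: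
  fixes p :: mpoly
  assumes "\<not> (\<exists>l. x = l + k)"
  shows "lk (p * sg k b) x = 0"
proof (rule ccontr)
  assume "lk (p * sg k b) x \<noteq> 0"
  from lookup_mult_nz[OF this] obtain a c where "lk (sg k b) c \<noteq> 0" "x = a + c" by blast
  then show False using assms by (auto simp: lookup_single when_def split: if_splits)
qed

definition noX4 :: "mpoly \<Rightarrow> bool" where
  "noX4 p \<longleftrightarrow> (\<forall>m. lk p m \<noteq> 0 \<longrightarrow> lk m I4 = 0)"

lemma noX4_iff: "noX4 p \<longleftrightarrow> poly_in_vars {I1,I2,I3} p"
proof -
  have "Poly_Mapping.keys m \<subseteq> {I1,I2,I3} \<longleftrightarrow> lk m I4 = 0" for m :: "idx \<Rightarrow>\<^sub>0 nat"
  proof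
    assume "Poly_Mapping.keys m \<subseteq> {I1,I2,I3}" then show "lk m I4 = 0"
      by (auto simp: in_keys_iff)
  next
    assume a: "lk m I4 = 0" show "Poly_Mapping.keys m \<subseteq> {I1,I2,I3}"
    proof
      fix x assume "x \<in> Poly_Mapping.keys m"
      then have "x \<noteq> I4" using a by (auto simp: in_keys_iff)
      then show "x \<in> {I1,I2,I3}" by (cases x) auto
    qed
  qed
  then show ?thesis by (auto simp: noX4_def poly_in_vars_def)
qed

lemma noX4_add: "noX4 p \<Longrightarrow> noX4 q \<Longrightarrow> noX4 (p + q)"
  unfolding noX4_def lookup_add by (metis add.left_neutral)

lemma noX4_uminus: "noX4 p \<Longrightarrow> noX4 (- p)"
  by (auto simp: noX4_def)

lemma noX4_mult: "noX4 p \<Longrightarrow> noX4 q \<Longrightarrow> noX4 (p * q)"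
  unfolding noX4_def
proof (intro allI impI)
  fix m assume "\<forall>m. lk p m \<noteq> 0 \<longrightarrow> lk m I4 = 0" "\<forall>m. lk q m \<noteq> 0 \<longrightarrow> lk m I4 = 0" "lk (p*q) m \<noteq> 0"
  then show "lk m I4 = 0" using lookup_mult_nz[of p q m] by (auto simp: lookup_add)
qed

lemma noX4_zero[simp]: "noX4 0" by (simp add: noX4_def)
lemma noX4_one[simp]: "noX4 1" by (simp add: noX4_def lookup_one when_def)
lemma noX4_of_nat[simp]: "noX4 (of_nat n)" by (simp add: noX4_def lookup_of_nat when_def)

lemma noX4_power: "noX4 p \<Longrightarrow> noX4 (p ^ n)"
  by (induction n) (auto intro: noX4_mult)

lemma noX4_sum: "(\<And>k. k \<in> K \<Longrightarrow> noX4 (f k)) \<Longrightarrow> noX4 (\<Sum>k\<in>K. f k)"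
  by (induction K rule: infinite_finite_induct) (auto intro: noX4_add)

lemma noX4_prod: "(\<And>k. k \<in> K \<Longrightarrow> noX4 (f k)) \<Longrightarrow> noX4 (\<Prod>k\<in>K. f k)"
  by (induction K rule: infinite_finite_induct) (auto intro: noX4_mult)

lemma noX4_Xv: "i \<noteq> I4 \<Longrightarrow> noX4 (Xv i)"
  by (auto simp: noX4_def Xv_def lookup_single when_def)

lemma Xv_power: "Xv i ^ n = sg (sg i n) 1"
  by (induction n) (simp_all add: Xv_def mult_single single_add[symmetric] add.commute)

lemma extract_term:
  assumes "noX4 c" "lk m I4 = 0"
  shows "lk (c * Xv I4 ^ j) (m + sg I4 i) = (if i = j then lk c m else 0)"
proof (cases "i = j")
  case True then show ?thesis by (simp add: Xv_power lookup_mult_single_shift)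
next
  case False
  show ?thesis
  proof (cases "\<exists>l. m + sg I4 i = l + sg I4 j")
    case True
    then obtain l where l: "m + sg I4 i = l + sg I4 j" by blast
    then have "lk (m + sg I4 i) I4 = lk (l + sg I4 j) I4" by simp
    then have "i = lk l I4 + j" using assms(2) by (simp add: lookup_add)
    then have "lk l I4 \<noteq> 0" using False by auto
    then have "lk c l = 0" using assms(1) by (auto simp: noX4_def)
    then show ?thesis using False by (simp add: l Xv_power lookup_mult_single_shift)
  next
    case F2: False
    then show ?thesis using False by (simp add: Xv_power lookup_mult_single_none)
  qed
qed

lemma extract_sum:
  assumes "\<And>j. noX4 (c j)" "lk m I4 = 0"
  shows "lk (\<Sum>j\<le>s. c j * Xv I4 ^ j) (m + sg I4 i) = (if i \<le> s then lk (c i) m else 0)"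
proof -
  have "lk (\<Sum>j\<le>s. c j * Xv I4 ^ j) (m + sg I4 i) = (\<Sum>j\<le>s. lk (c j * Xv I4 ^ j) (m + sg I4 i))"
    by (rule lookup_sum)
  also have "\<dots> = (\<Sum>j\<le>s. if i = j then lk (c j) m else 0)"
    by (rule sum.cong[OF refl]) (use extract_term[OF assms(1) assms(2)] in auto)
  also have "\<dots> = (if i \<le> s then lk (c i) m else 0)"
    by (simp add: sum.delta)
  finally show ?thesis .
qed

lemma noX4_eqI:
  assumes "noX4 p" "noX4 q" "\<And>m. lk m I4 = 0 \<Longrightarrow> lk p m = lk q m"
  shows "p = q"
proof (rule poly_mapping_eqI)
  fix m show "lk p m = lk q m"
  proof (cases "lk m I4 = 0")
    case True then show ?thesis using assms(3) by metis
  next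
    case False
    have "lk p m = 0" using assms(1) False unfolding noX4_def by metis
    moreover have "lk q m = 0" using assms(2) False unfolding noX4_def by metis
    ultimately show ?thesis by simp
  qed
qed

lemma extract_unique:
  assumes "\<And>j. noX4 (c j)" "\<And>j. noX4 (c' j)"
    and "(\<Sum>j\<le>s. c j * Xv I4 ^ j) = (\<Sum>j\<le>s. c' j * Xv I4 ^ j)" "i \<le> s"
  shows "c i = c' i"
proof (rule noX4_eqI[OF assms(1) assms(2)])
  fix m :: "idx \<Rightarrow>\<^sub>0 nat" assume m: "lk m I4 = 0"
  have "lk (\<Sum>j\<le>s. c j * Xv I4 ^ j) (m + sg I4 i) = lk (\<Sum>j\<le>s. c' j * Xv I4 ^ j) (m + sg I4 i)"
    using assms(3) by simp
  moreover have "lk (\<Sum>j\<le>s. c j * Xv I4 ^ j) (m + sg I4 i) = lk (c i) m"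
    using extract_sum[of c m s i, OF assms(1) m] assms(4) by simp
  moreover have "lk (\<Sum>j\<le>s. c' j * Xv I4 ^ j) (m + sg I4 i) = lk (c' i) m"
    using extract_sum[of c' m s i, OF assms(2) m] assms(4) by simp
  ultimately show "lk (c i) m = lk (c' i) m" by simp
qed

lemma binom_expand:
  fixes Y B :: "'a::comm_ring_1"
  shows "(\<Sum>k\<le>s. f k * (Y + B) ^ k) =
         (\<Sum>j\<le>s. (\<Sum>k\<le>s. f k * of_nat (k choose j) * B ^ (k - j)) * Y ^ j)"
proof -
  have "(\<Sum>k\<le>s. f k * (Y + B) ^ k) = (\<Sum>k\<le>s. \<Sum>j\<le>s. f k * of_nat (k choose j) * B ^ (k - j) * Y ^ j)"
  proof (rule sum.cong[OF refl])
    fix k assume k: "k \<in> {..s}"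
    have "f k * (Y + B) ^ k = (\<Sum>j\<le>k. f k * of_nat (k choose j) * B ^ (k - j) * Y ^ j)"
      by (simp add: binomial_ring sum_distrib_left mult_ac)
    also have "\<dots> = (\<Sum>j\<le>s. f k * of_nat (k choose j) * B ^ (k - j) * Y ^ j)"
      using k by (intro sum.mono_neutral_left) (auto simp: binomial_eq_0)
    finally show "f k * (Y + B) ^ k = (\<Sum>j\<le>s. f k * of_nat (k choose j) * B ^ (k - j) * Y ^ j)" .
  qed
  also have "\<dots> = (\<Sum>j\<le>s. \<Sum>k\<le>s. f k * of_nat (k choose j) * B ^ (k - j) * Y ^ j)"
    by (rule sum.swap)
  also have "\<dots> = (\<Sum>j\<le>s. (\<Sum>k\<le>s. f k * of_nat (k choose j) * B ^ (k - j)) * Y ^ j)"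
    by (simp add: sum_distrib_right)
  finally show ?thesis .
qed



lemma emb_add: "emb (p + q) = ladd (emb p) (emb q)"
  by (auto simp: emb_def ladd_def fun_eq_iff)

lemma ysgn_empty1[simp]: "ysgn {} B = 1" by (simp add: ysgn_def)
lemma ysgn_empty2[simp]: "ysgn A {} = 1" by (simp add: ysgn_def)

lemma emb_mult: "emb (p * q) = lmul (emb p) (emb q)"
proof (rule ext)
  fix S :: "idx set"
  show "emb (p * q) S = lmul (emb p) (emb q) S"
  proof (cases "S = {}")
    case True then show ?thesis by (simp add: emb_def lmul_def)
  next
    case False
    have "(\<Sum>A\<in>Pow S. ysgn A (S - A) * emb p A * emb q (S - A)) = 0"
      by (rule sum.neutral) (use False in \<open>auto simp: emb_def\<close>)
    then show ?thesis using False by (simp add: emb_def lmul_def)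
  qed
qed

lemma emb_one: "emb 1 = lone" by (simp add: emb_def lone_def)

lemma emb_const: "emb (const c) = lscale c lone"
  by (auto simp: emb_def lscale_def lone_def fun_eq_iff)

lemma emb_inj: "emb p = emb q \<Longrightarrow> p = q"
  by (metis emb_def)

definition good :: "(lam \<Rightarrow> lam) \<Rightarrow> mpoly \<Rightarrow> mpoly \<Rightarrow> bool" where
  "good \<alpha> p q \<longleftrightarrow> \<alpha> (emb p) = emb q"

locale autx =
  fixes \<alpha> :: "lam \<Rightarrow> lam"
  assumes add: "\<And>f g. \<alpha> (ladd f g) = ladd (\<alpha> f) (\<alpha> g)"
    and scale: "\<And>c f. \<alpha> (lscale c f) = lscale c (\<alpha> f)"
    and mul: "\<And>f g. \<alpha> (lmul f g) = lmul (\<alpha> f) (\<alpha> g)"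
    and one: "\<alpha> lone = lone"
begin

lemma good_add: "good \<alpha> p p' \<Longrightarrow> good \<alpha> q q' \<Longrightarrow> good \<alpha> (p + q) (p' + q')"
  by (simp add: good_def emb_add add)

lemma good_mult: "good \<alpha> p p' \<Longrightarrow> good \<alpha> q q' \<Longrightarrow> good \<alpha> (p * q) (p' * q')"
  by (simp add: good_def emb_mult mul)

lemma good_const: "good \<alpha> (const c) (const c)"
  by (simp add: good_def emb_const scale one)

lemma good_zero: "good \<alpha> 0 0"
  using good_const[of 0] by (simp add: const_def)

lemma good_one: "good \<alpha> 1 1"
  by (simp add: good_def emb_one one)

lemma good_power: "good \<alpha> p p' \<Longrightarrow> good \<alpha> (p ^ n) (p' ^ n)"
  by (induction n) (simp_all add: good_one good_mult)

lemma good_sum: "(\<And>k. k \<in> K \<Longrightarrow> good \<alpha> (f k) (g k)) \<Longrightarrow> good \<alpha> (\<Sum>k\<in>K. f k) (\<Sum>k\<in>K. g k)"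
  by (induction K rule: infinite_finite_induct) (auto intro: good_add simp: good_zero)

lemma good_prod: "(\<And>k. k \<in> K \<Longrightarrow> good \<alpha> (f k) (g k)) \<Longrightarrow> good \<alpha> (\<Prod>k\<in>K. f k) (\<Prod>k\<in>K. g k)"
  by (induction K rule: infinite_finite_induct) (auto intro: good_mult simp: good_one)

lemma good_fun: "good \<alpha> p q \<Longrightarrow> good \<alpha> p q' \<Longrightarrow> q = q'"
  by (simp add: good_def emb_inj)

end

lemma prod_single: "finite K \<Longrightarrow> (\<Prod>i\<in>K. sg (f i) (1::rat)) = sg (\<Sum>i\<in>K. f i) 1"
  by (induction K rule: finite_induct) (simp_all add: mult_single)

lemma monomial_decomp:
  "sg a b = const b * (\<Prod>i\<in>Poly_Mapping.keys a. Xv i ^ lk a i)"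
proof -
  have "(\<Sum>i\<in>Poly_Mapping.keys a. sg i (lk a i)) = a"
  proof (rule poly_mapping_eqI)
    fix k
    show "lk (\<Sum>i\<in>Poly_Mapping.keys a. sg i (lk a i)) k = lk a k"
      by (simp add: lookup_sum lookup_single when_def sum.delta in_keys_iff)
  qed
  then show ?thesis
    by (simp add: Xv_power prod_single const_def mult_single)
qed

lemma update_eq: "a \<notin> Poly_Mapping.keys f \<Longrightarrow> Poly_Mapping.update a c f = f + sg a c"
  by (intro poly_mapping_eqI) (auto simp: lookup_update lookup_add lookup_single in_keys_iff when_def)

context autx begin

lemma good_exists:
  assumes gen: "\<And>i. good \<alpha> (Xv i) (g i)" and gV: "\<And>i. i \<noteq> I4 \<Longrightarrow> noX4 (g i)"
  shows "\<exists>q. good \<alpha> p q \<and> (noX4 p \<longrightarrow> noX4 q)"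
proof (induction p rule: update_induct)
  case const then show ?case using good_zero by auto
next
  case (update f a c)
  then obtain q where q: "good \<alpha> f q" "noX4 f \<longrightarrow> noX4 q" by blast
  define r where "r = const c * (\<Prod>i\<in>Poly_Mapping.keys a. g i ^ lk a i)"
  have gr: "good \<alpha> (sg a c) r" unfolding monomial_decomp r_def
    by (intro good_mult good_const good_prod good_power gen)
  have "noX4 r" if "lk a I4 = 0"
  proof -
    have "noX4 (g i ^ lk a i)" if "i \<in> Poly_Mapping.keys a" for i
    proof -
      have "i \<noteq> I4" using that \<open>lk a I4 = 0\<close> by (auto simp: in_keys_iff)
      then show ?thesis by (intro noX4_power gV)
    qed
    moreover have "noX4 (const c)" by (simp add: noX4_def const_def lookup_single when_def)
    ultimately show ?thesis unfolding r_def by (intro noX4_mult noX4_prod) auto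
  qed
  moreover have "noX4 f \<and> lk a I4 = 0" if "noX4 (f + sg a c)"
  proof -
    have "lk (f + sg a c) a \<noteq> 0" using update.hyps by (simp add: lookup_add in_keys_iff)
    then have a: "lk a I4 = 0" using that by (simp add: noX4_def)
    have "noX4 f" unfolding noX4_def
    proof (intro allI impI)
      fix m assume "lk f m \<noteq> 0"
      then have "m \<noteq> a" using update.hyps by (auto simp: in_keys_iff)
      then have "lk (f + sg a c) m \<noteq> 0" using \<open>lk f m \<noteq> 0\<close> by (simp add: lookup_add lookup_single when_def)
      then show "lk m I4 = 0" using that by (simp add: noX4_def)
    qed
    then show ?thesis using a by simp
  qed
  ultimately show ?case using q gr update.hyps
    by (auto simp: update_eq intro!: exI[of _ "q + r"] good_add noX4_add)
qed

end



lemma sum_zero_pm: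
  fixes a b :: "idx \<Rightarrow>\<^sub>0 nat"
  assumes "0 = a + b" shows "a = 0"
proof (rule poly_mapping_eqI)
  fix k have "lk (a + b) k = 0" using assms by (metis lookup_zero)
  then show "lk a k = lk 0 k" by (simp add: lookup_add)
qed
 
lemma mult_const0:
  fixes p q :: mpoly
  assumes "lk p 0 = 0"
  shows "lk (p * q) 0 = 0" "lk (q * p) 0 = 0"
proof -
  show "lk (p * q) 0 = 0"
  proof (rule ccontr)
    assume "lk (p * q) 0 \<noteq> 0"
    from lookup_mult_nz[OF this] obtain a b where "lk p a \<noteq> 0" "0 = a + b" by blast
    then show False using assms sum_zero_pm by metis
  qed
  show "lk (q * p) 0 = 0"
  proof (rule ccontr)
    assume "lk (q * p) 0 \<noteq> 0"
    from lookup_mult_nz[OF this] obtain a b where "lk p b \<noteq> 0" "0 = a + b" by blast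
    then show False using assms sum_zero_pm by (metis add.commute)
  qed
qed

lemma sum_single1:
  fixes a b :: "idx \<Rightarrow>\<^sub>0 nat"
  assumes "a + b = sg j 1" "a \<noteq> 0" "b \<noteq> 0"
  shows False
proof -
  have ab: "lk a k + lk b k = (if k = j then 1 else 0)" for k
    using arg_cong[OF assms(1), of "\<lambda>m. lk m k"] by (simp add: lookup_add lookup_single when_def)
  have "lk a j = 0 \<or> lk b j = 0" using ab[of j] by presburger
  then show False
  proof
    assume "lk a j = 0"
    then have "lk a k = 0" for k using ab[of k] by (cases "k = j") auto
    then show False using assms(2) by (metis lookup_zero poly_mapping_eqI)
  next
    assume "lk b j = 0"
    then have "lk b k = 0" for k using ab[of k] by (cases "k = j") auto
    then show False using assms(3) by (metis lookup_zero poly_mapping_eqI)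
  qed
qed

lemma mult_lin0:
  fixes p q :: mpoly
  assumes "lk p 0 = 0" "lk q 0 = 0"
  shows "lk (p * q) (sg j 1) = 0"
proof (rule ccontr)
  assume "lk (p * q) (sg j 1) \<noteq> 0"
  from lookup_mult_nz[OF this] obtain a b where "lk p a \<noteq> 0" "lk q b \<noteq> 0" "sg j 1 = a + b" by blast
  moreover then have "a \<noteq> 0" "b \<noteq> 0" using assms by auto
  ultimately show False using sum_single1 by metis
qed

lemma ldec_prop:
  assumes "f \<in> ldec"
  shows "lk (f {}) 0 = 0 \<and> (\<forall>j. lk (f {}) (sg j 1) = 0) \<and> (\<forall>j. lk (f {j}) 0 = 0)"
  using assms
proof (induction rule: ldec.induct)
  case ldec_zero then show ?case by (simp add: lzero_def)
next
  case (ldec_step a b c)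
  have a0: "lk (a {}) 0 = 0" and b0: "lk (b {}) 0 = 0" using ldec_step.hyps by (auto simp: lplus_def)
  have m0: "lmul a b {} = a {} * b {}" by (simp add: lmul_def)
  have "Pow {j} = {{}, {j}}" for j :: idx by auto
  then have m1: "lmul a b {j} = a {} * b {j} + a {j} * b {}" for j
    by (simp add: lmul_def)
  have lin: "\<forall>j. lk (a {} * b {}) (sg j 1) = 0" using mult_lin0[OF a0 b0] by blast
  show ?case using ldec_step.IH lin
    by (simp add: ladd_def lookup_add m0 m1 mult_const0[OF a0] mult_const0[OF b0] mult_lin0[OF a0 b0])
qed



lemma mdeg_expand: "mdeg d m = lk m I1 * d I1 + lk m I2 * d I2 + lk m I3 * d I3 + lk m I4 * d I4"
  by (simp add: mdeg_def allidx_def)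

lemma pm_eq_idx:
  fixes m m' :: "idx \<Rightarrow>\<^sub>0 nat"
  assumes "lk m I1 = lk m' I1" "lk m I2 = lk m' I2" "lk m I3 = lk m' I3" "lk m I4 = lk m' I4"
  shows "m = m'"
proof (rule poly_mapping_eqI)
  fix k show "lk m k = lk m' k" using assms by (cases k) auto
qed

context
  fixes d e :: "idx \<Rightarrow> nat" and P :: "idx \<Rightarrow> mpoly"
  assumes st: "setting d e P"
begin

lemma d_pos: "d i > 0" using st by (simp add: setting_def)
lemma d_even: "even (d i)" using st by (simp add: setting_def)
lemma e_odd: "odd (e i)" using st by (simp add: setting_def)
lemma e_min: "e I1 \<le> e i" using st by (cases i) (auto simp: setting_def)
lemma d_max: "d i \<le> d I4" using st by (cases i) (auto simp: setting_def)

lemma mdeg_even: "even (mdeg d m)"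
  using d_even by (simp add: mdeg_expand)

lemma mdeg_zero: "mdeg d m = 0 \<Longrightarrow> m = 0"
  using d_pos[of I1] d_pos[of I2] d_pos[of I3] d_pos[of I4]
  by (intro pm_eq_idx) (auto simp: mdeg_expand)

lemma ydeg_ge: "ydeg e S \<ge> card S * e I1"
  using sum_bounded_below[of S "e I1" e] e_min by (simp add: ydeg_def)

lemma alpha_y1:
  assumes "\<alpha> \<in> aut_sharp d e P"
  shows "\<alpha> (ygen I1) = ygen I1"
proof -
  let ?g = "\<alpha> (ygen I1)"
  have hy: "lhom d e (e I1) (ygen I1)"
    by (auto simp: lhom_def ygen_def lookup_one when_def ydeg_def mdeg_def split: if_splits)
  then have hg: "lhom d e (e I1) ?g" using assms by (auto simp: aut_sharp_def cochain_aut_def)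
  have "ygen I1 \<in> lplus" by (simp add: lplus_def ygen_def)
  then have "lsub ?g (ygen I1) \<in> ldec" using assms by (auto simp: aut_sharp_def)
  from ldec_prop[OF this] have c0: "lk (?g {j}) 0 = lk (ygen I1 {j}) 0" for j
    by (auto simp: lsub_def lookup_minus)
  have e1: "e I1 \<ge> 1" using e_odd[of I1] by (cases "e I1") auto
  show ?thesis
  proof (rule ext)
    fix S :: "idx set"
    consider "S = {}" | j where "S = {j}" | "card S \<ge> 2"
      by (metis One_nat_def card_1_singletonE card_0_eq finite_idx_set less_2_cases not_less)
    then show "?g S = ygen I1 S"
    proof cases
      case 1
      have "lk (?g S) m = 0" for m
      proof (rule ccontr)
        assume "lk (?g S) m \<noteq> 0"
        then have "mdeg d m + ydeg e {} = e I1" using hg 1 unfolding lhom_def by blast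
        then have "mdeg d m = e I1" by (simp add: ydeg_def)
        then show False using mdeg_even[of m] e_odd[of I1] by simp
      qed
      then show ?thesis using 1 by (intro poly_mapping_eqI) (simp add: ygen_def)
    next
      case 3
      have "lk (?g S) m = 0" for m
      proof (rule ccontr)
        assume "lk (?g S) m \<noteq> 0"
        then have "mdeg d m + ydeg e S = e I1" using hg by (auto simp: lhom_def)
        moreover have "ydeg e S \<ge> 2 * e I1" using ydeg_ge[of S] 3
          by (meson dual_order.trans mult_le_mono1)
        ultimately show False using e1 by linarith
      qed
      moreover have "S \<noteq> {I1}" using 3 by auto
      ultimately show ?thesis by (intro poly_mapping_eqI) (simp add: ygen_def)
    next
      case (2 j)
      have "lk (?g S) m = 0" if "m \<noteq> 0" for m
      proof (rule ccontr)
        assume "lk (?g S) m \<noteq> 0"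
        then have "mdeg d m + ydeg e {j} = e I1" using hg 2 unfolding lhom_def by blast
        then have "mdeg d m + e j = e I1" by (simp add: ydeg_def)
        then have "mdeg d m = 0" using e_min[of j] by linarith
        then show False using mdeg_zero that by blast
      qed
      moreover have "lk (ygen I1 S) m = 0" if "m \<noteq> 0" for m
        using that by (simp add: ygen_def lookup_one when_def)
      ultimately show ?thesis using c0[of j] 2
        by (intro poly_mapping_eqI) (metis)
    qed
  qed
qed

lemma ldiff_y1: "ldiff P (ygen I1) = emb (P I1)"
proof (rule ext)
  fix T :: "idx set"
  show "ldiff P (ygen I1) T = emb (P I1) T"
  proof (cases "T = {}")
    case True then show ?thesis by (simp add: ldiff_def emb_def ygen_def allidx_def)
  next
    case False
    have "ygen I1 (insert j T) = 0" if "j \<in> allidx - T" for j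
      using that False by (auto simp: ygen_def)
    then show ?thesis using False by (simp add: ldiff_def emb_def)
  qed
qed

lemma alpha_P1:
  assumes "\<alpha> \<in> aut_sharp d e P"
  shows "\<alpha> (emb (P I1)) = emb (P I1)"
proof -
  have "\<alpha> (ldiff P (ygen I1)) = ldiff P (\<alpha> (ygen I1))"
    using assms by (simp add: aut_sharp_def cochain_aut_def)
  then show ?thesis using alpha_y1[OF assms] by (simp add: ldiff_y1)
qed

lemma A_noX4:
  assumes "\<alpha> \<in> aut_sharp d e P" and i: "i \<noteq> I1"
    and ai: "\<alpha> (emb (Xv i)) = emb (Xv i + A)"
  shows "noX4 A"
proof -
  have "sg i (1::nat) \<noteq> 0" by (metis lookup_single_eq lookup_zero one_neq_zero)
  then have "emb (Xv i) \<in> lplus" by (simp add: lplus_def emb_def Xv_def lookup_single when_def)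
  then have "lsub (\<alpha> (emb (Xv i))) (emb (Xv i)) \<in> ldec" using assms by (auto simp: aut_sharp_def)
  moreover have "lsub (\<alpha> (emb (Xv i))) (emb (Xv i)) {} = A" unfolding ai by (simp add: lsub_def emb_def)
  ultimately have A0: "lk A 0 = 0" and A1: "\<And>j. lk A (sg j 1) = 0" using ldec_prop by metis+
  have "lhom d e (d i) (emb (Xv i))"
    by (cases i) (auto simp: lhom_def emb_def Xv_def lookup_single when_def ydeg_def mdeg_expand)
  then have "lhom d e (d i) (\<alpha> (emb (Xv i)))" using assms(1) unfolding aut_sharp_def cochain_aut_def by blast
  then have "lhom d e (d i) (emb (Xv i + A))" using ai by simp
  then have hd: "lk (Xv i + A) m \<noteq> 0 \<Longrightarrow> mdeg d m = d i" for m
    by (auto simp: lhom_def emb_def ydeg_def dest: spec[of _ "{}"])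
  show ?thesis unfolding noX4_def
  proof (intro allI impI)
    fix m assume m: "lk A m \<noteq> 0"
    have "m \<noteq> sg i 1" using m A1 by auto
    then have "lk (Xv i + A) m \<noteq> 0" using m by (simp add: Xv_def lookup_add lookup_single when_def)
    then have deg: "mdeg d m \<le> d I4" using hd d_max by metis
    show "lk m I4 = 0"
    proof (rule ccontr)
      assume ne: "lk m I4 \<noteq> 0"
      have "m \<noteq> sg I4 1" using m A1 by auto
      have p: "d I1 > 0" "d I2 > 0" "d I3 > 0" "d I4 > 0" using d_pos by auto
      have eq: "lk m I1 * d I1 + lk m I2 * d I2 + lk m I3 * d I3 + lk m I4 * d I4 \<le> d I4"
        using deg by (simp add: mdeg_expand)
      have "lk m I4 * d I4 \<ge> d I4" using ne by simp
      then have z: "lk m I1 * d I1 = 0" "lk m I2 * d I2 = 0" "lk m I3 * d I3 = 0" "lk m I4 * d I4 = d I4"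
        using eq by linarith+
      then have "lk m I1 = 0" "lk m I2 = 0" "lk m I3 = 0" "lk m I4 = 1" using p by auto
      then have "m = sg I4 1" by (intro pm_eq_idx) (simp_all add: lookup_single when_def)
      then show False using \<open>m \<noteq> sg I4 1\<close> by simp
    qed
  qed
qed

end



lemma down_unique:
  fixes \<phi> \<psi> :: "nat \<Rightarrow> 'a::comm_ring_1"
  assumes h: "\<And>j. j \<le> s \<Longrightarrow> (\<Sum>k\<le>s. \<phi> k * of_nat (k choose j) * B ^ (k - j)) = (\<Sum>k\<le>s. \<psi> k * of_nat (k choose j) * B ^ (k - j))"
  shows "j \<le> s \<Longrightarrow> \<phi> j = \<psi> j"
proof (induction "s - j" arbitrary: j rule: less_induct)
  case less
  define D where "D k = (\<phi> k - \<psi> k) * of_nat (k choose j) * B ^ (k - j)" for k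
  have "(\<Sum>k\<le>s. D k) = 0"
    using h[OF less.prems] by (simp add: D_def sum_subtractf algebra_simps)
  moreover have "(\<Sum>k\<le>s. D k) = D j + (\<Sum>k\<in>{..s} - {j}. D k)"
    using less.prems by (intro sum.remove) auto
  moreover have "(\<Sum>k\<in>{..s} - {j}. D k) = 0"
  proof (rule sum.neutral, intro ballI)
    fix k assume k: "k \<in> {..s} - {j}"
    show "D k = 0"
    proof (cases "k < j")
      case True then show ?thesis by (simp add: D_def binomial_eq_0)
    next
      case False
      then have "s - k < s - j" "k \<le> s" using k by auto
      then have "\<phi> k = \<psi> k" using less.hyps by blast
      then show ?thesis by (simp add: D_def)
    qed
  qed
  ultimately have "D j = 0" by simp
  then show ?case by (simp add: D_def)
qed

lemma final_reindex:
  fixes \<theta> :: "nat \<Rightarrow> 'a::comm_ring_1"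
  assumes "i < s"
  shows "(\<Sum>l\<le>s. \<theta> l * of_nat (l choose i) * (- A) ^ (l - i)) =
         \<theta> i + (\<Sum>k=1..s-i. (-1) ^ k * of_nat ((k + i) choose k) * \<theta> (k + i) * A ^ k)"
proof -
  let ?f = "\<lambda>l. \<theta> l * of_nat (l choose i) * (- A) ^ (l - i)"
  have "(\<Sum>l\<le>s. ?f l) = (\<Sum>l\<in>{i..s}. ?f l)"
    by (rule sum.mono_neutral_right) (auto simp: binomial_eq_0)
  also have "\<dots> = (\<Sum>k\<in>{0..s-i}. ?f (k + i))"
  proof -
    have "{i..s} = {0 + i..(s - i) + i}" using assms by simp
    then show ?thesis by (simp only: sum.shift_bounds_cl_nat_ivl)
  qed
  also have "\<dots> = ?f (0 + i) + (\<Sum>k\<in>{Suc 0..s-i}. ?f (k + i))"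
    by (rule sum.atLeast_Suc_atMost) simp
  also have "?f (0 + i) = \<theta> i" by simp
  also have "(\<Sum>k\<in>{Suc 0..s-i}. ?f (k + i)) =
             (\<Sum>k=1..s-i. (-1) ^ k * of_nat ((k + i) choose k) * \<theta> (k + i) * A ^ k)"
  proof (rule sum.cong)
    fix k
    have "(k + i) choose i = (k + i) choose k" using binomial_symmetric[of i "k + i"] by simp
    moreover have "(- A) ^ k = (-1) ^ k * A ^ k" by (rule power_minus)
    ultimately show "?f (k + i) = (-1) ^ k * of_nat ((k + i) choose k) * \<theta> (k + i) * A ^ k"
      by (simp only: add_diff_cancel_right') (simp add: mult_ac)
  qed simp
  finally show ?thesis .
qed

theorem proposition3p3:
  fixes d e :: "idx \<Rightarrow> nat" and P A :: "idx \<Rightarrow> mpoly" and \<alpha> :: "lam \<Rightarrow> lam"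
    and \<theta> :: "nat \<Rightarrow> mpoly" and s :: nat
  assumes "setting d e P"
    and "\<alpha> \<in> aut_sharp d e P"
    and "\<alpha> (emb (Xv I1)) = emb (Xv I1)"
    and "\<forall>i\<in>{I2, I3, I4}. \<alpha> (emb (Xv i)) = emb (Xv i + A i)"
    and "\<forall>i. poly_in_vars allidx (A i)"
    and "\<forall>k. poly_in_vars {I1, I2, I3} (\<theta> k)"
    and "\<theta> s \<noteq> 0"
    and "P I1 = (\<Sum>k\<le>s. \<theta> k * Xv I4 ^ k)"
  shows "\<forall>i<s. \<alpha> (emb (\<theta> i)) =
           emb (\<theta> i + (\<Sum>k=1..s-i. (-1) ^ k * of_nat ((k + i) choose k) * \<theta> (k + i) * A I4 ^ k))"
proof -
  note st = assms(1)
  interpret autx \<alpha>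
    using assms(2) by unfold_locales (auto simp: aut_sharp_def cochain_aut_def)
  define g where "g i = (if i = I1 then Xv I1 else Xv i + A i)" for i
  have gen: "good \<alpha> (Xv i) (g i)" for i
    using assms(3,4) by (cases i) (auto simp: good_def g_def)
  have AV: "noX4 (A i)" if "i \<noteq> I1" for i
    using A_noX4[OF st assms(2) that] gen[of i] that by (simp add: good_def g_def)
  have gV: "noX4 (g i)" if "i \<noteq> I4" for i
    using that AV by (cases i) (auto simp: g_def noX4_Xv intro!: noX4_add)
  define \<Phi> where "\<Phi> p = \<alpha> (emb p) {}" for p
  have \<Phi>: "good \<alpha> p (\<Phi> p) \<and> (noX4 p \<longrightarrow> noX4 (\<Phi> p))" for p
  proof -
    obtain q where q: "good \<alpha> p q" "noX4 p \<longrightarrow> noX4 q" using good_exists[OF gen gV] by blast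
    then have "\<Phi> p = q" by (simp add: \<Phi>_def good_def emb_def)
    then show ?thesis using q by simp
  qed
  have th: "noX4 (\<theta> k)" for k using assms(6) noX4_iff by blast
  define X where "X = Xv I4"
  define B where "B = A I4"
  have BV: "noX4 B" using AV[of I4] by (simp add: B_def)
  define \<phi> where "\<phi> k = \<Phi> (\<theta> k)" for k
  have \<phi>V: "noX4 (\<phi> k)" for k using \<Phi> th by (simp add: \<phi>_def)
  have "good \<alpha> (P I1) (\<Sum>k\<le>s. \<phi> k * (X + B) ^ k)"
    unfolding assms(8) \<phi>_def X_def B_def
    by (intro good_sum good_mult good_power) (use \<Phi> gen[of I4] in \<open>auto simp: g_def\<close>)
  moreover have "good \<alpha> (P I1) (P I1)" using alpha_P1[OF st assms(2)] by (simp add: good_def)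
  ultimately have eq1: "(\<Sum>k\<le>s. \<phi> k * (X + B) ^ k) = (\<Sum>k\<le>s. \<theta> k * X ^ k)"
    using good_fun assms(8) X_def by metis
  define c\<phi> where "c\<phi> j = (\<Sum>k\<le>s. \<phi> k * of_nat (k choose j) * B ^ (k - j))" for j
  have c\<phi>V: "noX4 (c\<phi> j)" for j unfolding c\<phi>_def
    by (intro noX4_sum noX4_mult noX4_power \<phi>V BV noX4_of_nat)
  have "(\<Sum>j\<le>s. c\<phi> j * X ^ j) = (\<Sum>j\<le>s. \<theta> j * X ^ j)"
    using eq1 binom_expand[of \<phi> X B s] by (simp add: c\<phi>_def)
  then have E1: "c\<phi> j = \<theta> j" if "j \<le> s" for j
    using extract_unique[OF c\<phi>V th _ that] by (simp add: X_def)
  define \<psi> where "\<psi> k = (\<Sum>l\<le>s. \<theta> l * of_nat (l choose k) * (- B) ^ (l - k))" for k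
  have \<psi>V: "noX4 (\<psi> k)" for k unfolding \<psi>_def
    by (intro noX4_sum noX4_mult noX4_power th noX4_uminus BV noX4_of_nat)
  have "(\<Sum>k\<le>s. \<psi> k * (X + B) ^ k) = (\<Sum>l\<le>s. \<theta> l * ((X + B) + - B) ^ l)"
    using binom_expand[of \<theta> "X + B" "- B" s] by (simp add: \<psi>_def)
  also have "\<dots> = (\<Sum>l\<le>s. \<theta> l * X ^ l)" by simp
  finally have eq2: "(\<Sum>k\<le>s. \<psi> k * (X + B) ^ k) = (\<Sum>l\<le>s. \<theta> l * X ^ l)" .
  define c\<psi> where "c\<psi> j = (\<Sum>k\<le>s. \<psi> k * of_nat (k choose j) * B ^ (k - j))" for j
  have c\<psi>V: "noX4 (c\<psi> j)" for j unfolding c\<psi>_def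
    by (intro noX4_sum noX4_mult noX4_power \<psi>V BV noX4_of_nat)
  have "(\<Sum>j\<le>s. c\<psi> j * X ^ j) = (\<Sum>j\<le>s. \<theta> j * X ^ j)"
    using eq2 binom_expand[of \<psi> X B s] by (simp add: c\<psi>_def)
  then have E2: "c\<psi> j = \<theta> j" if "j \<le> s" for j
    using extract_unique[OF c\<psi>V th _ that] by (simp add: X_def)
  have same: "\<phi> j = \<psi> j" if "j \<le> s" for j
    by (rule down_unique[of s \<phi> B \<psi>]) (use E1 E2 that in \<open>simp_all add: c\<phi>_def c\<psi>_def\<close>)
  show ?thesis
  proof (intro allI impI)
    fix i assume i: "i < s"
    have "\<alpha> (emb (\<theta> i)) = emb (\<phi> i)" using \<Phi> by (simp add: good_def \<phi>_def)
    also have "\<phi> i = \<psi> i" using same i by simp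
    also have "\<psi> i = \<theta> i + (\<Sum>k=1..s-i. (-1) ^ k * of_nat ((k + i) choose k) * \<theta> (k + i) * A I4 ^ k)"
      unfolding \<psi>_def B_def by (rule final_reindex[OF i])
    finally show "\<alpha> (emb (\<theta> i)) = emb (\<theta> i + (\<Sum>k=1..s-i. (-1) ^ k * of_nat ((k + i) choose k) * \<theta> (k + i) * A I4 ^ k))" .
  qed
qed


end
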